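(* Let $G$ be a connected (finite, simple) graph with girth $g=g(G)<\infty$, and let $\chi$ be the largest Euler characteristic of a surface in which $G$ can be embedded; consider $G$ embedded in such a surface. Let $ad(G)=2|E(G)|/|V(G)|$ be the average degree of $G$ and $|G|=|V(G)|$. Then: \begin{enumerate} \item[(i)] $ad(G) \leq \frac{2g}{g-2}\left(1-\frac{\chi}{|G|}\right)$. \item[(ii)] If $G$ contains no two intersecting $g$-faces, then $ad(G) \leq 2 + \frac{4g+2}{g^2-g}-2\left(1+\frac{2}{g-1}\right)\frac{\chi}{|G|}$. \item[(iii)] If $G$ contains no two adjacent $g$-faces, then $ad(G) \leq \frac{2g(g+1)}{g^2-g-1}\left(1-\frac{\chi}{|G|}\right)$. \end{enumerate}
   Context: Graphs have no loops or multiple edges. Surfaces are compact 2-manifolds: the orientable surface $\mathbb{S}_h$ (sphere with $h$ handles) has Euler characteristic $2-2h$, $h\ge 0$, and the non-orientable surface $\mathbb{N}_k$ (sphere with $k$ crosscaps) has Euler characteristic $2-k$, $k\ge1$. If $G$ is embedded in a surface $\mathbb{M}$, the faces of $G$ are the connected components of $\mathbb{M}-G$; the degree of a face is the length of its boundary walk, and a $g$-face is a face of degree $g$. Two faces are intersecting if they share a common vertex, and adjacent if they share a common edge. The girth $g(G)$ is the length of a shortest cycle of $G$. *)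

theory Defs
  imports Complex_Main
begin

definition simple_graph :: "'a set \<Rightarrow> 'a set set \<Rightarrow> bool" where
  "simple_graph V E \<longleftrightarrow> finite V \<and>
     (\<forall>e\<in>E. \<exists>u v. u \<in> V \<and> v \<in> V \<and> u \<noteq> v \<and> e = {u, v})"

definition connected_graph :: "'a set \<Rightarrow> 'a set set \<Rightarrow> bool" where
  "connected_graph V E \<longleftrightarrow> V \<noteq> {} \<and>
     (\<forall>u\<in>V. \<forall>v\<in>V. (\<lambda>a b. {a, b} \<in> E)\<^sup>*\<^sup>* u v)"

definition is_cycle :: "'a set \<Rightarrow> 'a set set \<Rightarrow> 'a list \<Rightarrow> bool" where
  "is_cycle V E vs \<longleftrightarrow> length vs \<ge> 3 \<and> distinct vs \<and> set vs \<subseteq> V \<and>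
     (\<forall>i < length vs. {vs ! i, vs ! ((i + 1) mod length vs)} \<in> E)"

definition has_cycle :: "'a set \<Rightarrow> 'a set set \<Rightarrow> bool" where
  "has_cycle V E \<longleftrightarrow> (\<exists>vs. is_cycle V E vs)"

definition girth :: "'a set \<Rightarrow> 'a set set \<Rightarrow> nat" where
  "girth V E = (LEAST n. \<exists>vs. is_cycle V E vs \<and> length vs = n)"

text \<open>A (possibly non-orientable) cellular embedding of a graph in a closed surface is
  encoded by its set of flags with the three fixed-point-free involutions
  t0 (change vertex), t1 (change edge), t2 (change face), with t0 t2 = t2 t0,
  and the vertex of each flag.\<close>

record ('f, 'a) gmap =
  flags :: "'f set"
  t0 :: "'f \<Rightarrow> 'f"
  t1 :: "'f \<Rightarrow> 'f"
  t2 :: "'f \<Rightarrow> 'f"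
  vtx :: "'f \<Rightarrow> 'a"

definition orb2 :: "('f \<Rightarrow> 'f) \<Rightarrow> ('f \<Rightarrow> 'f) \<Rightarrow> 'f \<Rightarrow> 'f set" where
  "orb2 s t x = {y. (\<lambda>a b. b = s a \<or> b = t a)\<^sup>*\<^sup>* x y}"

definition fpf_involution :: "'f set \<Rightarrow> ('f \<Rightarrow> 'f) \<Rightarrow> bool" where
  "fpf_involution F s \<longleftrightarrow> (\<forall>x\<in>F. s x \<in> F \<and> s (s x) = x \<and> s x \<noteq> x)"

definition medge :: "('f, 'a) gmap \<Rightarrow> 'f \<Rightarrow> 'a set" where
  "medge M x = {vtx M x, vtx M (t0 M x)}"

definition is_embedding :: "'a set \<Rightarrow> 'a set set \<Rightarrow> ('f, 'a) gmap \<Rightarrow> bool" where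
  "is_embedding V E M \<longleftrightarrow>
     finite (flags M) \<and>
     fpf_involution (flags M) (t0 M) \<and>
     fpf_involution (flags M) (t1 M) \<and>
     fpf_involution (flags M) (t2 M) \<and>
     (\<forall>x\<in>flags M. t0 M (t2 M x) = t2 M (t0 M x) \<and> t0 M x \<noteq> t2 M x) \<and>
     (\<forall>x\<in>flags M. \<forall>y\<in>flags M.
        (\<lambda>a b. b = t0 M a \<or> b = t1 M a \<or> b = t2 M a)\<^sup>*\<^sup>* x y) \<and>
     (\<forall>x\<in>flags M. vtx M x \<in> V \<and> vtx M (t1 M x) = vtx M x \<and> vtx M (t2 M x) = vtx M x) \<and>
     (\<forall>x\<in>flags M. medge M x \<in> E) \<and>
     (\<forall>e\<in>E. \<exists>x\<in>flags M. medge M x = e) \<and>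
     (\<forall>v\<in>V. \<exists>x\<in>flags M. vtx M x = v) \<and>
     (\<forall>x\<in>flags M. \<forall>y\<in>flags M. medge M x = medge M y \<longrightarrow>
        y \<in> {x, t0 M x, t2 M x, t0 M (t2 M x)}) \<and>
     (\<forall>x\<in>flags M. \<forall>y\<in>flags M. vtx M x = vtx M y \<longrightarrow> y \<in> orb2 (t1 M) (t2 M) x)"

text \<open>Faces are the orbits of \<langle>t0, t1\<rangle>; the boundary walk of a face traverses
  half as many edge-sides as the face has flags.\<close>

definition faces :: "('f, 'a) gmap \<Rightarrow> 'f set set" where
  "faces M = (\<lambda>x. orb2 (t0 M) (t1 M) x) ` flags M"

definition face_deg :: "'f set \<Rightarrow> nat" where
  "face_deg f = card f div 2"

definition face_vertices :: "('f, 'a) gmap \<Rightarrow> 'f set \<Rightarrow> 'a set" where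
  "face_vertices M f = vtx M ` f"

definition face_edges :: "('f, 'a) gmap \<Rightarrow> 'f set \<Rightarrow> 'a set set" where
  "face_edges M f = medge M ` f"

definition euler_char :: "'a set \<Rightarrow> 'a set set \<Rightarrow> ('f, 'a) gmap \<Rightarrow> int" where
  "euler_char V E M = int (card V) - int (card E) + int (card (faces M))"

definition no_two_intersecting_faces_of_deg :: "('f, 'a) gmap \<Rightarrow> nat \<Rightarrow> bool" where
  "no_two_intersecting_faces_of_deg M g \<longleftrightarrow>
     (\<forall>f1\<in>faces M. \<forall>f2\<in>faces M. f1 \<noteq> f2 \<and> face_deg f1 = g \<and> face_deg f2 = g \<longrightarrow>
        face_vertices M f1 \<inter> face_vertices M f2 = {})"

definition no_two_adjacent_faces_of_deg :: "('f, 'a) gmap \<Rightarrow> nat \<Rightarrow> bool" where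
  "no_two_adjacent_faces_of_deg M g \<longleftrightarrow>
     (\<forall>f1\<in>faces M. \<forall>f2\<in>faces M. f1 \<noteq> f2 \<and> face_deg f1 = g \<and> face_deg f2 = g \<longrightarrow>
        face_edges M f1 \<inter> face_edges M f2 = {})"

end

theory Submission
  imports Defs
begin


lemma inv_even:
  assumes "finite S" "\<forall>a\<in>S. s a \<in> S \<and> s (s a) = a \<and> s a \<noteq> a"
  shows "even (card S)"
  using assms
proof (induction "card S" arbitrary: S rule: less_induct)
  case less
  show ?case
  proof (cases "S = {}")
    case True then show ?thesis by simp
  next
    case False
    then obtain a where a: "a \<in> S" by blast
    define S' where "S' = S - {a, s a}"
    have sa: "s a \<in> S" "s a \<noteq> a" using less.prems a by auto
    have c: "card S' = card S - 2" unfolding S'_def using less.prems(1) a sa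
      by (simp add: card_Diff_subset)
    have "card {a, s a} \<le> card S" using less.prems(1) a sa by (intro card_mono) auto
    then have cS: "card S \<ge> 2" using sa by simp
    have "even (card S')"
    proof (rule less.hyps)
      show "card S' < card S" using c cS by simp
      show "finite S'" using less.prems(1) S'_def by simp
      show "\<forall>b\<in>S'. s b \<in> S' \<and> s (s b) = b \<and> s b \<noteq> b"
      proof
        fix b assume b: "b \<in> S'"
        have bS: "b \<in> S" "b \<noteq> a" "b \<noteq> s a" using b S'_def by auto
        have p: "s b \<in> S" "s (s b) = b" "s b \<noteq> b" using less.prems(2) bS(1) by auto
        have q: "s (s a) = a" using less.prems(2) a by auto
        have "s b \<noteq> a" using p(2) bS(3) by auto
        moreover have "s b \<noteq> s a" using p(2) q bS(2) by metis
        ultimately show "s b \<in> S' \<and> s (s b) = b \<and> s b \<noteq> b"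
          using p S'_def by auto
      qed
    qed
    then show ?thesis using c cS by simp
  qed
qed

lemma fiber_sum:
  assumes "finite A"
  shows "card A = (\<Sum>b\<in>h ` A. card {a\<in>A. h a = b})"
proof -
  have "A = (\<Union>b\<in>h ` A. {a\<in>A. h a = b})" by auto
  then have "card A = card (\<Union>b\<in>h ` A. {a\<in>A. h a = b})" by simp
  also have "\<dots> = (\<Sum>b\<in>h ` A. card {a\<in>A. h a = b})"
    by (rule card_UN_disjoint) (use assms in auto)
  finally show ?thesis .
qed

lemma card_ge_sub:
  assumes "finite A" "B \<subseteq> {a\<in>A. h a = b}"
  shows "card B \<le> card {a\<in>A. h a = b}"
proof -
  have "finite {a\<in>A. h a = b}" using assms(1) by simp
  then show ?thesis using card_mono assms(2) by blast
qed

lemma fib2: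
  assumes "finite A" "\<forall>a\<in>A. s a \<in> A \<and> s a \<noteq> a \<and> h (s a) = h a" "b \<in> h ` A"
  shows "2 \<le> card {a\<in>A. h a = b}"
proof -
  obtain a where a: "a \<in> A" "h a = b" using assms(3) by blast
  have s: "s a \<in> A" "s a \<noteq> a" "h (s a) = h a" using assms(2) a(1) by auto
  have "{a, s a} \<subseteq> {a\<in>A. h a = b}" using a s by blast
  then have "card {a, s a} \<le> card {a\<in>A. h a = b}" by (rule card_ge_sub[OF assms(1)])
  moreover have "card {a, s a} = 2" using s(2) by simp
  ultimately show ?thesis by simp
qed

lemma fiber_bound:
  assumes "finite A" "\<forall>a\<in>A. s a \<in> A \<and> s a \<noteq> a \<and> h (s a) = h a"
  shows "2 * card (h ` A) \<le> card A"
proof -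
  have "2 * card (h ` A) = (\<Sum>b\<in>h ` A. 2)" by simp
  also have "\<dots> \<le> (\<Sum>b\<in>h ` A. card {a\<in>A. h a = b})"
    by (rule sum_mono) (rule fib2[OF assms])
  also have "\<dots> = card A" using fiber_sum[OF assms(1), of h] by simp
  finally show ?thesis .
qed

lemma fiber_bound3:
  assumes "finite A" "\<forall>a\<in>A. s a \<in> A \<and> s a \<noteq> a \<and> h (s a) = h a"
    and "a0 \<in> A" "a1 \<in> A" "a2 \<in> A" "a0 \<noteq> a1" "a0 \<noteq> a2" "a1 \<noteq> a2"
    "h a1 = h a0" "h a2 = h a0"
  shows "2 * card (h ` A) + 1 \<le> card A"
proof -
  let ?b = "h a0"
  have fin: "finite (h ` A)" using assms(1) by simp
  have b: "?b \<in> h ` A" using assms(3) by blast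
  have c1: "card (h ` A) = Suc (card (h ` A - {?b}))"
    using b fin by (metis card_Suc_Diff1)
  have "2 * card (h ` A) + 1 = 3 + (\<Sum>b\<in>h ` A - {?b}. 2)"
    using c1 by simp
  also have "\<dots> \<le> card {a\<in>A. h a = ?b} + (\<Sum>b\<in>h ` A - {?b}. card {a\<in>A. h a = b})"
  proof (rule add_mono)
    have "{a0, a1, a2} \<subseteq> {a\<in>A. h a = ?b}" using assms(3-10) by blast
    then have "card {a0, a1, a2} \<le> card {a\<in>A. h a = ?b}" by (rule card_ge_sub[OF assms(1)])
    moreover have "card {a0, a1, a2} = 3" using assms(6-8) by simp
    ultimately show "3 \<le> card {a\<in>A. h a = ?b}" by simp
    show "(\<Sum>b\<in>h ` A - {?b}. 2) \<le> (\<Sum>b\<in>h ` A - {?b}. card {a\<in>A. h a = b})"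
      by (rule sum_mono) (rule fib2[OF assms(1,2)], blast)
  qed
  also have "\<dots> = (\<Sum>b\<in>h ` A. card {a\<in>A. h a = b})"
    using b fin by (simp add: sum.remove)
  also have "\<dots> = card A" using fiber_sum[OF assms(1), of h] by simp
  finally show ?thesis .
qed




lemma rtranclp_distinct_path:
  assumes "R\<^sup>*\<^sup>* a b"
  shows "\<exists>ps. ps \<noteq> [] \<and> hd ps = a \<and> last ps = b \<and> distinct ps \<and>
           (\<forall>i. Suc i < length ps \<longrightarrow> R (ps!i) (ps!Suc i))"
  using assms
proof (induction rule: rtranclp_induct)
  case base
  show ?case by (rule exI[of _ "[a]"]) simp
next
  case (step y z)
  then obtain ps where ps: "ps \<noteq> []" "hd ps = a" "last ps = y" "distinct ps"
    "\<forall>i. Suc i < length ps \<longrightarrow> R (ps!i) (ps!Suc i)" by blast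
  show ?case
  proof (cases "z \<in> set ps")
    case True
    then obtain k where k: "k < length ps" "ps ! k = z" by (auto simp: in_set_conv_nth)
    let ?qs = "take (Suc k) ps"
    have e: "?qs = take k ps @ [ps!k]" using k by (simp add: take_Suc_conv_app_nth)
    show ?thesis
    proof (intro exI conjI)
      show "?qs \<noteq> []" using ps(1) by simp
      show "hd ?qs = a" using ps(1,2) by (simp add: hd_take)
      show "last ?qs = z" using e k by simp
      show "distinct ?qs" using ps(4) by simp
      show "\<forall>i. Suc i < length ?qs \<longrightarrow> R (?qs!i) (?qs!Suc i)"
        using ps(5) k by auto
    qed
  next
    case False
    let ?qs = "ps @ [z]"
    show ?thesis
    proof (intro exI conjI)
      show "?qs \<noteq> []" by simp
      show "hd ?qs = a" using ps(1,2) by simp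
      show "last ?qs = z" by simp
      show "distinct ?qs" using ps(4) False by simp
      show "\<forall>i. Suc i < length ?qs \<longrightarrow> R (?qs!i) (?qs!Suc i)"
      proof (intro allI impI)
        fix i assume i: "Suc i < length ?qs"
        show "R (?qs!i) (?qs!Suc i)"
        proof (cases "Suc i < length ps")
          case True then show ?thesis using ps(5) by (simp add: nth_append)
        next
          case False
          then have "i = length ps - 1" "Suc i = length ps" using i by auto
          moreover have "ps ! (length ps - 1) = y" using ps(1,3) by (simp add: last_conv_nth)
          ultimately show ?thesis using step.hyps(2) ps(1) by (simp add: nth_append)
        qed
      qed
    qed
  qed
qed



lemma orb_closed:
  assumes "fpf_involution F s" "fpf_involution F t" "x \<in> F"
    "(\<lambda>a b. b = s a \<or> b = t a)\<^sup>*\<^sup>* x y"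
  shows "y \<in> F \<and> (\<lambda>a b. b = s a \<or> b = t a)\<^sup>*\<^sup>* y x"
  using assms(4)
proof (induction rule: rtranclp_induct)
  case base then show ?case using assms(3) by simp
next
  case (step y z)
  have yF: "y \<in> F" using step.IH by blast
  have zF: "z \<in> F" "y = s z \<or> y = t z"
    using step.hyps(2) yF assms(1,2) unfolding fpf_involution_def by auto
  have r1: "(\<lambda>a b. b = s a \<or> b = t a) z y" using zF(2) by simp
  have r2: "(\<lambda>a b. b = s a \<or> b = t a)\<^sup>*\<^sup>* y x" using step.IH by blast
  show ?case using zF(1) converse_rtranclp_into_rtranclp[of "\<lambda>a b. b = s a \<or> b = t a", OF r1 r2]
    by blast
qed

lemma orb_sub: "fpf_involution F s \<Longrightarrow> fpf_involution F t \<Longrightarrow> x \<in> F \<Longrightarrow> orb2 s t x \<subseteq> F"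
proof
  fix y assume a: "fpf_involution F s" "fpf_involution F t" "x \<in> F" and "y \<in> orb2 s t x"
  then have "(\<lambda>a b. b = s a \<or> b = t a)\<^sup>*\<^sup>* x y" unfolding orb2_def by simp
  then show "y \<in> F" using orb_closed[OF a] by blast
qed

lemma orb_self: "x \<in> orb2 s t x" unfolding orb2_def by simp

lemma orb_s: "a \<in> orb2 s t x \<Longrightarrow> s a \<in> orb2 s t x"
  unfolding orb2_def by (simp add: rtranclp.rtrancl_into_rtrancl)

lemma orb_t: "a \<in> orb2 s t x \<Longrightarrow> t a \<in> orb2 s t x"
  unfolding orb2_def by (simp add: rtranclp.rtrancl_into_rtrancl)

lemma orb_eq:
  assumes "fpf_involution F s" "fpf_involution F t" "x \<in> F" "y \<in> orb2 s t x"
  shows "orb2 s t y = orb2 s t x"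
proof -
  let ?R = "\<lambda>a b. b = s a \<or> b = t a"
  have 1: "?R\<^sup>*\<^sup>* x y" using assms(4) unfolding orb2_def by simp
  have 2: "?R\<^sup>*\<^sup>* y x" using orb_closed[OF assms(1-3) 1] by blast
  show ?thesis
  proof (rule set_eqI)
    fix z
    show "z \<in> orb2 s t y \<longleftrightarrow> z \<in> orb2 s t x"
    proof
      assume "z \<in> orb2 s t y"
      then have "?R\<^sup>*\<^sup>* y z" unfolding orb2_def by simp
      then have "?R\<^sup>*\<^sup>* x z" using 1 by (rule rtranclp_trans[rotated])
      then show "z \<in> orb2 s t x" unfolding orb2_def by simp
    next
      assume "z \<in> orb2 s t x"
      then have "?R\<^sup>*\<^sup>* x z" unfolding orb2_def by simp
      then have "?R\<^sup>*\<^sup>* y z" using 2 by (rule rtranclp_trans[rotated])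
      then show "z \<in> orb2 s t y" unfolding orb2_def by simp
    qed
  qed
qed




context
  fixes V :: "'a set" and E :: "'a set set" and M :: "('f, 'a) gmap"
  assumes emb: "is_embedding V E M"
begin

lemma e_fin: "finite (flags M)" using emb unfolding is_embedding_def by (elim conjE) assumption
lemma e_i0: "fpf_involution (flags M) (t0 M)" using emb unfolding is_embedding_def by (elim conjE) assumption
lemma e_i1: "fpf_involution (flags M) (t1 M)" using emb unfolding is_embedding_def by (elim conjE) assumption
lemma e_i2: "fpf_involution (flags M) (t2 M)" using emb unfolding is_embedding_def by (elim conjE) assumption
lemma e_0: "x \<in> flags M \<Longrightarrow> t0 M x \<in> flags M \<and> t0 M (t0 M x) = x \<and> t0 M x \<noteq> x"
  using e_i0 unfolding fpf_involution_def by blast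
lemma e_1: "x \<in> flags M \<Longrightarrow> t1 M x \<in> flags M \<and> t1 M (t1 M x) = x \<and> t1 M x \<noteq> x"
  using e_i1 unfolding fpf_involution_def by blast
lemma e_2: "x \<in> flags M \<Longrightarrow> t2 M x \<in> flags M \<and> t2 M (t2 M x) = x \<and> t2 M x \<noteq> x"
  using e_i2 unfolding fpf_involution_def by blast
lemma e_comm_all: "\<forall>x\<in>flags M. t0 M (t2 M x) = t2 M (t0 M x) \<and> t0 M x \<noteq> t2 M x"
  using emb unfolding is_embedding_def by (elim conjE) assumption
lemma e_comm: "x \<in> flags M \<Longrightarrow> t0 M (t2 M x) = t2 M (t0 M x) \<and> t0 M x \<noteq> t2 M x"
  using e_comm_all by blast
lemma e_conn_all: "\<forall>x\<in>flags M. \<forall>y\<in>flags M.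
        (\<lambda>a b. b = t0 M a \<or> b = t1 M a \<or> b = t2 M a)\<^sup>*\<^sup>* x y"
  using emb unfolding is_embedding_def by (elim conjE) assumption
lemma e_conn: "x \<in> flags M \<Longrightarrow> y \<in> flags M \<Longrightarrow>
    (\<lambda>a b. b = t0 M a \<or> b = t1 M a \<or> b = t2 M a)\<^sup>*\<^sup>* x y"
  using e_conn_all by blast
lemma e_vtx_all: "\<forall>x\<in>flags M. vtx M x \<in> V \<and> vtx M (t1 M x) = vtx M x \<and> vtx M (t2 M x) = vtx M x"
  using emb unfolding is_embedding_def by (elim conjE) assumption
lemma e_vtx: "x \<in> flags M \<Longrightarrow> vtx M x \<in> V \<and> vtx M (t1 M x) = vtx M x \<and> vtx M (t2 M x) = vtx M x"
  using e_vtx_all by blast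
lemma e_edge_all: "\<forall>x\<in>flags M. medge M x \<in> E"
  using emb unfolding is_embedding_def by (elim conjE) assumption
lemma e_edge: "x \<in> flags M \<Longrightarrow> medge M x \<in> E"
  using e_edge_all by blast
lemma e_sE: "\<forall>e\<in>E. \<exists>x\<in>flags M. medge M x = e"
  using emb unfolding is_embedding_def by (elim conjE) assumption
lemma e_sV: "\<forall>v\<in>V. \<exists>x\<in>flags M. vtx M x = v"
  using emb unfolding is_embedding_def by (elim conjE) assumption
lemma e_surjE: "E = medge M ` flags M"
proof (rule antisym)
  show "E \<subseteq> medge M ` flags M"
  proof
    fix e assume "e \<in> E"
    then obtain x where "x \<in> flags M" "medge M x = e" using e_sE by blast
    then show "e \<in> medge M ` flags M" by (rule rev_image_eqI[OF _ sym])
  qed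
  show "medge M ` flags M \<subseteq> E" using e_edge by (rule image_subsetI)
qed
lemma e_surjV: "V = vtx M ` flags M"
proof (rule antisym)
  show "V \<subseteq> vtx M ` flags M"
  proof
    fix e assume "e \<in> V"
    then obtain x where "x \<in> flags M" "vtx M x = e" using e_sV by blast
    then show "e \<in> vtx M ` flags M" by (rule rev_image_eqI[OF _ sym])
  qed
  show "vtx M ` flags M \<subseteq> V" using e_vtx by (intro image_subsetI) blast
qed
lemma e_med_all: "\<forall>x\<in>flags M. \<forall>y\<in>flags M. medge M x = medge M y \<longrightarrow>
        y \<in> {x, t0 M x, t2 M x, t0 M (t2 M x)}"
  using emb unfolding is_embedding_def by (elim conjE) assumption
lemma e_med: "x \<in> flags M \<Longrightarrow> y \<in> flags M \<Longrightarrow> medge M x = medge M y \<Longrightarrow>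
        y \<in> {x, t0 M x, t2 M x, t0 M (t2 M x)}"
  using e_med_all by blast

lemma e_closed_all:
  assumes "x \<in> flags M" "x \<in> S" "\<forall>a\<in>S. t0 M a \<in> S \<and> t1 M a \<in> S \<and> t2 M a \<in> S"
  shows "flags M \<subseteq> S"
proof
  fix y assume y: "y \<in> flags M"
  have "(\<lambda>a b. b = t0 M a \<or> b = t1 M a \<or> b = t2 M a)\<^sup>*\<^sup>* x y" using e_conn assms(1) y by blast
  then show "y \<in> S"
    by (induction rule: rtranclp_induct) (use assms(2,3) in auto)
qed

lemma face_cycle_A:
  assumes sg: "simple_graph V E" and x: "x \<in> flags M"
    and fdef: "f = orb2 (t0 M) (t1 M) x" and nx: "t2 M x \<notin> f"
  shows "\<exists>vs. is_cycle V E vs \<and> set vs \<subseteq> vtx M ` f"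
proof -
  let ?u = "vtx M x" and ?v = "vtx M (t0 M x)"
  have fsub: "f \<subseteq> flags M" using orb_sub[OF e_i0 e_i1 x] fdef by simp
  have xf: "x \<in> f" using fdef orb_self by metis
  have f0: "\<And>a. a \<in> f \<Longrightarrow> t0 M a \<in> f" using fdef orb_s by metis
  have f1: "\<And>a. a \<in> f \<Longrightarrow> t1 M a \<in> f" using fdef orb_t by metis
  have eE: "{?u, ?v} \<in> E" using e_edge[OF x] unfolding medge_def .
  obtain a0 b0 where ab: "a0 \<noteq> b0" "{?u, ?v} = {a0, b0}"
    using sg eE unfolding simple_graph_def by blast
  have uv: "?u \<noteq> ?v" using ab by (auto simp: doubleton_eq_iff)
  define step where "step = (\<lambda>a b. a \<in> f \<and> (b = t1 M a \<or> (b = t0 M a \<and> a \<noteq> x \<and> a \<noteq> t0 M x)))"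
  define R where "R = {b. step\<^sup>*\<^sup>* x b}"
  have Rf: "R \<subseteq> f"
  proof
    fix b assume "b \<in> R"
    then have "step\<^sup>*\<^sup>* x b" unfolding R_def by simp
    then show "b \<in> f"
    proof (induction rule: rtranclp_induct)
      case base show ?case by (rule xf)
    next
      case (step a c)
      then have "a \<in> f" "c = t1 M a \<or> c = t0 M a" unfolding step_def by auto
      then show ?case using f0 f1 by blast
    qed
  qed
  have xR: "x \<in> R" unfolding R_def by simp
  have finR: "finite R" using finite_subset[OF subset_trans[OF Rf fsub] e_fin] .
  have t0xR: "t0 M x \<in> R"
  proof (rule ccontr)
    assume nR: "t0 M x \<notin> R"
    have "even (card R)"
    proof (rule inv_even[OF finR, of "t1 M"], intro ballI conjI)
      fix a assume a: "a \<in> R"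
      have "a \<in> flags M" using a Rf fsub by blast
      then show "t1 M (t1 M a) = a" "t1 M a \<noteq> a" using e_1 by auto
      have "step a (t1 M a)" using a Rf step_def by auto
      moreover have "step\<^sup>*\<^sup>* x a" using a unfolding R_def by simp
      ultimately show "t1 M a \<in> R" unfolding R_def
        using rtranclp.rtrancl_into_rtrancl[of step x a "t1 M a"] by simp
    qed
    moreover have "even (card (R - {x}))"
    proof (rule inv_even[of _ "t0 M"], use finR in simp, intro ballI conjI)
      fix a assume a: "a \<in> R - {x}"
      have af: "a \<in> flags M" using a Rf fsub by blast
      then show "t0 M (t0 M a) = a" "t0 M a \<noteq> a" using e_0 by auto
      have "a \<noteq> t0 M x" using a nR by auto
      then have "step a (t0 M a)" using a Rf step_def by auto
      moreover have "step\<^sup>*\<^sup>* x a" using a unfolding R_def by simp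
      ultimately have "t0 M a \<in> R" unfolding R_def
        using rtranclp.rtrancl_into_rtrancl[of step x a "t0 M a"] by simp
      moreover have "t0 M a \<noteq> x"
      proof
        assume "t0 M a = x"
        then have "t0 M x = a" using e_0[OF af] by auto
        then show False using a nR by auto
      qed
      ultimately show "t0 M a \<in> R - {x}" by simp
    qed
    moreover have "card (R - {x}) = card R - 1" "card R \<ge> 1"
      using xR finR by (auto simp: Suc_le_eq card_gt_0_iff)
    ultimately show False by (cases "card R") auto
  qed
  define H where "H = medge M ` f - {medge M x}"
  define Q where "Q = (\<lambda>a b. {a, b} \<in> H)"
  have stepQ: "\<And>b. step\<^sup>*\<^sup>* x b \<Longrightarrow> Q\<^sup>*\<^sup>* ?u (vtx M b)"
  proof -
    fix b assume "step\<^sup>*\<^sup>* x b"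
    then show "Q\<^sup>*\<^sup>* ?u (vtx M b)"
    proof (induction rule: rtranclp_induct)
      case base then show ?case by simp
    next
      case (step a c)
      have af: "a \<in> f" "a \<in> flags M" using step.hyps(2) step_def fsub by auto
      show ?case
      proof (cases "c = t1 M a")
        case True
        then show ?thesis using step.IH e_vtx[OF af(2)] by simp
      next
        case False
        then have c: "c = t0 M a" "a \<noteq> x" "a \<noteq> t0 M x" using step.hyps(2) step_def by auto
        have "medge M a \<noteq> medge M x"
        proof
          assume "medge M a = medge M x"
          then have "a \<in> {x, t0 M x, t2 M x, t0 M (t2 M x)}" using e_med[OF x af(2)] by simp
          moreover have "a \<noteq> t2 M x" using nx af by auto
          moreover have "a \<noteq> t0 M (t2 M x)"
          proof
            assume "a = t0 M (t2 M x)"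
            then have "t0 M a = t2 M x" using e_0 e_2[OF x] by auto
            then show False using f0[OF af(1)] nx by simp
          qed
          ultimately show False using c by auto
        qed
        then have "Q (vtx M a) (vtx M c)" unfolding Q_def H_def medge_def using af(1) c(1)
          by (auto simp: medge_def)
        then show ?thesis using step.IH by (simp add: rtranclp.rtrancl_into_rtrancl)
      qed
    qed
  qed
  have "Q\<^sup>*\<^sup>* ?u ?v" using stepQ t0xR unfolding R_def by simp
  then obtain ps where ps: "ps \<noteq> []" "hd ps = ?u" "last ps = ?v" "distinct ps"
    "\<forall>i. Suc i < length ps \<longrightarrow> Q (ps!i) (ps!Suc i)"
    using rtranclp_distinct_path by metis
  have HE: "H \<subseteq> E" unfolding H_def using fsub e_edge by auto
  have Hv: "\<And>a b. {a, b} \<in> H \<Longrightarrow> b \<in> vtx M ` f"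
  proof -
    fix a b assume "{a, b} \<in> H"
    then obtain y where y: "y \<in> f" "{a, b} = {vtx M y, vtx M (t0 M y)}"
      unfolding H_def medge_def by auto
    then show "b \<in> vtx M ` f" using f0[OF y(1)] by (auto simp: doubleton_eq_iff)
  qed
  have len2: "length ps \<ge> 2"
  proof (rule ccontr)
    assume n2: "\<not> length ps \<ge> 2"
    have "length ps \<noteq> 0" using ps(1) by simp
    then have "length ps = 1" using n2 by linarith
    then have "hd ps = last ps" by (cases ps) auto
    then show False using ps(2,3) uv by simp
  qed
  have len3: "length ps \<ge> 3"
  proof (rule ccontr)
    assume "\<not> length ps \<ge> 3"
    then have l: "length ps = 2" using len2 by simp
    then have "ps ! 0 = ?u" "ps ! 1 = ?v" using ps(1,2,3)
      by (auto simp: hd_conv_nth last_conv_nth)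
    moreover have "Q (ps!0) (ps!Suc 0)" using ps(5) l by simp
    ultimately have "Q ?u ?v" by simp
    then show False unfolding Q_def H_def medge_def by simp
  qed
  have setf: "set ps \<subseteq> vtx M ` f"
  proof
    fix w assume "w \<in> set ps"
    then obtain i where i: "i < length ps" "ps ! i = w" by (auto simp: in_set_conv_nth)
    show "w \<in> vtx M ` f"
    proof (cases i)
      case 0 then show ?thesis using i ps(1,2) xf by (auto simp: hd_conv_nth)
    next
      case (Suc j)
      then have "Suc j < length ps" using i by simp
      then have "Q (ps!j) (ps!Suc j)" using ps(5) by blast
      then have "{ps!j, ps!i} \<in> H" unfolding Q_def using Suc by simp
      then show ?thesis using Hv i by blast
    qed
  qed
  have "vtx M ` f \<subseteq> V" using fsub e_vtx by auto
  then have setV: "set ps \<subseteq> V" using setf by simp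
  have edges: "\<forall>i < length ps. {ps ! i, ps ! ((i + 1) mod length ps)} \<in> E"
  proof (intro allI impI)
    fix i assume i: "i < length ps"
    show "{ps ! i, ps ! ((i + 1) mod length ps)} \<in> E"
    proof (cases "Suc i < length ps")
      case True
      then have "Q (ps!i) (ps!Suc i)" using ps(5) by simp
      then show ?thesis using HE True unfolding Q_def by auto
    next
      case False
      then have si: "Suc i = length ps" using i by simp
      then have "i = length ps - 1" "(i + 1) mod length ps = 0" by auto
      then have "ps ! i = ?v" "ps ! ((i + 1) mod length ps) = ?u" using ps(1,2,3)
        by (auto simp: hd_conv_nth last_conv_nth)
      then show ?thesis using eE by (simp add: insert_commute)
    qed
  qed
  have "is_cycle V E ps" unfolding is_cycle_def using len3 ps(4) setV edges by simp
  then show ?thesis using setf by blast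
qed

end



context
  fixes V :: "'a set" and E :: "'a set set" and M :: "('f, 'a) gmap"
  assumes emb: "is_embedding V E M" and sg: "simple_graph V E" and hc: "has_cycle V E"
begin

lemma face_rep: "f \<in> faces M \<Longrightarrow> \<exists>x\<in>flags M. f = orb2 (t0 M) (t1 M) x"
  unfolding faces_def by auto

lemma face_props:
  assumes "f \<in> faces M"
  shows "f \<subseteq> flags M" "\<And>a. a \<in> f \<Longrightarrow> t0 M a \<in> f" "\<And>a. a \<in> f \<Longrightarrow> t1 M a \<in> f"
    "finite f"
proof -
  obtain x where x: "x \<in> flags M" "f = orb2 (t0 M) (t1 M) x" using face_rep assms by blast
  show fs: "f \<subseteq> flags M" using orb_sub[OF e_i0[OF emb] e_i1[OF emb] x(1)] x(2) by simp
  show "\<And>a. a \<in> f \<Longrightarrow> t0 M a \<in> f" unfolding x(2) by (rule orb_s)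
  show "\<And>a. a \<in> f \<Longrightarrow> t1 M a \<in> f" unfolding x(2) by (rule orb_t)
  show "finite f" using finite_subset[OF fs e_fin[OF emb]] .
qed

lemma face_cycle:
  assumes f: "f \<in> faces M"
  shows "\<exists>vs. is_cycle V E vs \<and> set vs \<subseteq> face_vertices M f"
proof -
  obtain x where x: "x \<in> flags M" "f = orb2 (t0 M) (t1 M) x" using face_rep f by blast
  show ?thesis
  proof (cases "\<exists>y\<in>f. t2 M y \<notin> f")
    case True
    then obtain y where y: "y \<in> f" "t2 M y \<notin> f" by blast
    have yf: "y \<in> flags M" using y(1) face_props(1)[OF f] by blast
    have fy: "f = orb2 (t0 M) (t1 M) y"
      using orb_eq[OF e_i0[OF emb] e_i1[OF emb] x(1)] x(2) y(1) by simp
    obtain vs where "is_cycle V E vs" "set vs \<subseteq> vtx M ` f"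
      using face_cycle_A[OF emb sg yf fy y(2)] by blast
    then show ?thesis unfolding face_vertices_def by blast
  next
    case False
    have xf: "x \<in> f" unfolding x(2) by (rule orb_self)
    have cl: "\<forall>a\<in>f. t0 M a \<in> f \<and> t1 M a \<in> f \<and> t2 M a \<in> f"
      using False face_props(2,3)[OF f] by blast
    have "flags M \<subseteq> f" by (rule e_closed_all[OF emb x(1) xf cl])
    then have Vs: "V \<subseteq> face_vertices M f" using e_surjV[OF emb] unfolding face_vertices_def
      by (simp add: image_mono)
    obtain vs where vs: "is_cycle V E vs" using hc unfolding has_cycle_def by blast
    then have "set vs \<subseteq> V" unfolding is_cycle_def by simp
    then show ?thesis using vs Vs by (meson order_trans)
  qed
qed

lemma girth_cycle: "\<exists>vs. is_cycle V E vs \<and> length vs = girth V E"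
proof -
  obtain vs where vs: "is_cycle V E vs" using hc unfolding has_cycle_def by blast
  have "\<exists>ws. is_cycle V E ws \<and> length ws = length vs" using vs by blast
  then show ?thesis unfolding girth_def
    by (rule LeastI[where P="\<lambda>n. \<exists>ws. is_cycle V E ws \<and> length ws = n"])
qed

lemma girth_ge3: "girth V E \<ge> 3"
  using girth_cycle unfolding is_cycle_def by auto

lemma girth_le: "is_cycle V E vs \<Longrightarrow> girth V E \<le> length vs"
  unfolding girth_def by (rule Least_le) blast

lemma face_even:
  assumes f: "f \<in> faces M" shows "even (card f)"
proof (rule inv_even[OF face_props(4)[OF f], of "t0 M"], intro ballI conjI)
  fix a assume a: "a \<in> f"
  then have "a \<in> flags M" using face_props(1)[OF f] by blast
  then show "t0 M (t0 M a) = a" "t0 M a \<noteq> a" using e_0[OF emb] by auto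
  show "t0 M a \<in> f" using face_props(2)[OF f a] .
qed

lemma face_bounds:
  assumes f: "f \<in> faces M"
  shows "girth V E \<le> card (face_vertices M f)" "2 * card (face_vertices M f) \<le> card f"
proof -
  obtain vs where vs: "is_cycle V E vs" "set vs \<subseteq> face_vertices M f" using face_cycle f by blast
  have fin: "finite (face_vertices M f)" using face_props(4)[OF f] unfolding face_vertices_def by simp
  have "girth V E \<le> length vs" using girth_le vs(1) .
  also have "\<dots> = card (set vs)" using vs(1) unfolding is_cycle_def by (simp add: distinct_card)
  also have "\<dots> \<le> card (face_vertices M f)" using card_mono[OF fin vs(2)] .
  finally show "girth V E \<le> card (face_vertices M f)" .
  show "2 * card (face_vertices M f) \<le> card f" unfolding face_vertices_def
  proof (rule fiber_bound[OF face_props(4)[OF f], of "t1 M"], intro ballI conjI)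
    fix a assume a: "a \<in> f"
    then have af: "a \<in> flags M" using face_props(1)[OF f] by blast
    show "t1 M a \<in> f" using face_props(3)[OF f a] .
    show "t1 M a \<noteq> a" using e_1[OF emb af] by blast
    show "vtx M (t1 M a) = vtx M a" using e_vtx[OF emb af] by blast
  qed
qed

lemma face_deg_ge: "f \<in> faces M \<Longrightarrow> girth V E \<le> face_deg f"
proof -
  assume f: "f \<in> faces M"
  have "girth V E \<le> card (face_vertices M f)" "2 * card (face_vertices M f) \<le> card f"
    using face_bounds[OF f] by auto
  then show ?thesis unfolding face_deg_def by linarith
qed

lemma faces_disj: "f1 \<in> faces M \<Longrightarrow> f2 \<in> faces M \<Longrightarrow> f1 \<noteq> f2 \<Longrightarrow> f1 \<inter> f2 = {}"
proof -
  assume f1: "f1 \<in> faces M" and f2: "f2 \<in> faces M" and ne: "f1 \<noteq> f2"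
  obtain x1 where x1: "x1 \<in> flags M" "f1 = orb2 (t0 M) (t1 M) x1" using face_rep f1 by blast
  obtain x2 where x2: "x2 \<in> flags M" "f2 = orb2 (t0 M) (t1 M) x2" using face_rep f2 by blast
  show "f1 \<inter> f2 = {}"
  proof (rule ccontr)
    assume "f1 \<inter> f2 \<noteq> {}"
    then obtain z where "z \<in> f1" "z \<in> f2" by blast
    then have "orb2 (t0 M) (t1 M) z = f1" "orb2 (t0 M) (t1 M) z = f2"
      using orb_eq[OF e_i0[OF emb] e_i1[OF emb] x1(1), of z] orb_eq[OF e_i0[OF emb] e_i1[OF emb] x2(1), of z]
        x1(2) x2(2) by simp_all
    then show False using ne by simp
  qed
qed

lemma faces_fin: "finite (faces M)"
  unfolding faces_def using e_fin[OF emb] by simp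

lemma sum_faces: "(\<Sum>f\<in>S. card f) \<le> card (flags M)" if "S \<subseteq> faces M"
proof -
  have fS: "finite S" using finite_subset[OF that faces_fin] .
  have "card (\<Union>f\<in>S. f) = (\<Sum>f\<in>S. card f)"
  proof (rule card_UN_disjoint[OF fS])
    show "\<forall>i\<in>S. finite i" using that face_props(4) by blast
    show "\<forall>i\<in>S. \<forall>j\<in>S. i \<noteq> j \<longrightarrow> i \<inter> j = {}"
      using that faces_disj by blast
  qed
  moreover have "card (\<Union>f\<in>S. f) \<le> card (flags M)"
  proof (rule card_mono[OF e_fin[OF emb]])
    show "(\<Union>f\<in>S. f) \<subseteq> flags M" using that face_props(1) by blast
  qed
  ultimately show ?thesis by simp
qed

lemma flags_le: "card (flags M) \<le> 4 * card E"
proof -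
  have finE: "finite E" using e_surjE[OF emb] e_fin[OF emb] by simp
  have eq: "flags M = (\<Union>e\<in>E. {x\<in>flags M. medge M x = e})" using e_edge[OF emb] by blast
  have "card (\<Union>e\<in>E. {x\<in>flags M. medge M x = e}) \<le> (\<Sum>e\<in>E. card {x\<in>flags M. medge M x = e})"
    by (rule card_UN_le[OF finE])
  then have "card (flags M) \<le> (\<Sum>e\<in>E. card {x\<in>flags M. medge M x = e})"
    using eq by simp
  also have "\<dots> \<le> (\<Sum>e\<in>E. 4)"
  proof (rule sum_mono)
    fix e assume "e \<in> E"
    then obtain x0 where x0: "x0 \<in> flags M" "medge M x0 = e" using e_sE[OF emb] by blast
    have sub: "{x\<in>flags M. medge M x = e} \<subseteq> set [x0, t0 M x0, t2 M x0, t0 M (t2 M x0)]"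
    proof
      fix y assume "y \<in> {x\<in>flags M. medge M x = e}"
      then have "y \<in> flags M" "medge M x0 = medge M y" using x0 by auto
      then have "y \<in> {x0, t0 M x0, t2 M x0, t0 M (t2 M x0)}" using e_med[OF emb x0(1)] by blast
      then show "y \<in> set [x0, t0 M x0, t2 M x0, t0 M (t2 M x0)]" by simp
    qed
    have "card {x\<in>flags M. medge M x = e} \<le> card (set [x0, t0 M x0, t2 M x0, t0 M (t2 M x0)])"
      by (rule card_mono[OF _ sub]) simp
    also have "\<dots> \<le> 4" using card_length[of "[x0, t0 M x0, t2 M x0, t0 M (t2 M x0)]"] by simp
    finally show "card {x\<in>flags M. medge M x = e} \<le> 4" .
  qed
  finally show ?thesis by simp
qed

end



context
  fixes V :: "'a set" and E :: "'a set set" and M :: "('f, 'a) gmap"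
  assumes emb: "is_embedding V E M" and sg: "simple_graph V E" and hc: "has_cycle V E"
begin

lemma no_self_gface:
  assumes f: "f \<in> faces M" and xf: "x \<in> f" and x2: "t2 M x \<in> f"
    and deg: "face_deg f = girth V E"
  shows False
proof -
  let ?g = "girth V E"
  have g3: "?g \<ge> 3" by (rule girth_ge3[OF emb sg hc])
  have cf: "card f = 2 * ?g" using face_even[OF emb sg hc f] deg unfolding face_deg_def by auto
  have fb: "?g \<le> card (vtx M ` f)" using face_bounds(1)[OF emb sg hc f] unfolding face_vertices_def .
  have fs: "f \<subseteq> flags M" using face_props(1)[OF emb sg hc f] .
  have f0: "\<And>a. a \<in> f \<Longrightarrow> t0 M a \<in> f" using face_props(2)[OF emb sg hc f] .
  have f1: "\<And>a. a \<in> f \<Longrightarrow> t1 M a \<in> f" using face_props(3)[OF emb sg hc f] .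
  have finf: "finite f" using face_props(4)[OF emb sg hc f] .
  have xF: "x \<in> flags M" using xf fs by blast
  have fibc: "\<forall>a\<in>f. t1 M a \<in> f \<and> t1 M a \<noteq> a \<and> vtx M (t1 M a) = vtx M a"
  proof
    fix a assume a: "a \<in> f"
    then have af: "a \<in> flags M" using fs by blast
    show "t1 M a \<in> f \<and> t1 M a \<noteq> a \<and> vtx M (t1 M a) = vtx M a"
      using f1[OF a] e_1[OF emb af] e_vtx[OF emb af] by blast
  qed
  have x0: "t0 M x \<in> flags M" "t0 M (t0 M x) = x" "t0 M x \<noteq> x" using e_0[OF emb xF] by auto
  have x1: "t1 M x \<in> flags M" "t1 M (t1 M x) = x" "t1 M x \<noteq> x" using e_1[OF emb xF] by auto
  have x2': "t2 M x \<in> flags M" "t2 M (t2 M x) = x" "t2 M x \<noteq> x" using e_2[OF emb xF] by auto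
  have xc: "t0 M (t2 M x) = t2 M (t0 M x)" using e_comm[OF emb xF] by blast
  have xv: "vtx M (t1 M x) = vtx M x" "vtx M (t2 M x) = vtx M x" using e_vtx[OF emb xF] by auto
  let ?y = "t0 M x"
  have yf: "?y \<in> f" using f0[OF xf] .
  have y1: "t1 M (t1 M ?y) = ?y" "t1 M ?y \<noteq> ?y" using e_1[OF emb x0(1)] by auto
  have y2: "t2 M (t2 M ?y) = ?y" "t2 M ?y \<noteq> ?y" using e_2[OF emb x0(1)] by auto
  have yv: "vtx M (t1 M ?y) = vtx M ?y" "vtx M (t2 M ?y) = vtx M ?y" using e_vtx[OF emb x0(1)] by auto
  have z0: "t0 M (t0 M (t2 M x)) = t2 M x" using e_0[OF emb x2'(1)] by auto
  have key: "2 * card (vtx M ` f) + 1 \<le> card f"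
  proof (cases "t1 M x = t2 M x")
    case False
    show ?thesis
      by (rule fiber_bound3[OF finf fibc xf f1[OF xf] x2]) (use x1 x2' False xv in auto)
  next
    case c1: True
    show ?thesis
    proof (cases "t1 M ?y = t2 M ?y")
      case False
      have y2f: "t2 M ?y \<in> f" using f0[OF x2] xc by simp
      show ?thesis
        by (rule fiber_bound3[OF finf fibc yf f1[OF yf] y2f]) (use y1 y2 False yv in auto)
    next
      case c2: True
      let ?S = "{x, ?y, t2 M x, t0 M (t2 M x)}"
      have cl: "\<forall>a\<in>?S. t0 M a \<in> ?S \<and> t1 M a \<in> ?S \<and> t2 M a \<in> ?S"
      proof -
        have "t1 M (t2 M x) = x" using c1 x1(2) by metis
        moreover have "t1 M (t0 M (t2 M x)) = ?y" using c2 y1(1) xc by metis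
        moreover have "t2 M (t0 M (t2 M x)) = ?y" using y2(1) xc by metis
        moreover have "t1 M ?y = t0 M (t2 M x)" using c2 xc by simp
        moreover have "t2 M ?y = t0 M (t2 M x)" using xc by simp
        ultimately show ?thesis using c1 x0(2) x2'(2) z0 by auto
      qed
      have "flags M \<subseteq> ?S" by (rule e_closed_all[OF emb xF _ cl]) simp
      then have "f \<subseteq> ?S" using fs by blast
      then have "card f \<le> card (set [x, ?y, t2 M x, t0 M (t2 M x)])"
        by (intro card_mono) auto
      also have "\<dots> \<le> 4" using card_length[of "[x, ?y, t2 M x, t0 M (t2 M x)]"] by simp
      finally show ?thesis using cf g3 by simp
    qed
  qed
  show False using key cf fb by linarith
qed

lemma medge_t2: "x \<in> flags M \<Longrightarrow> medge M (t2 M x) = medge M x"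
proof -
  assume xF: "x \<in> flags M"
  have "t0 M x \<in> flags M" using e_0[OF emb xF] by blast
  then show ?thesis unfolding medge_def using e_comm[OF emb xF] e_vtx[OF emb xF] e_vtx[OF emb]
    by metis
qed

lemma K1:
  defines "G \<equiv> faces M \<inter> {f. face_deg f = girth V E}"
    and "Ot \<equiv> faces M \<inter> - {f. face_deg f = girth V E}"
  shows "girth V E * card G + (girth V E + 1) * card Ot \<le> 2 * card E"
proof -
  let ?g = "girth V E"
  let ?h = "\<lambda>f. if face_deg f = ?g then 2 * ?g else 2 * (?g + 1)"
  have "(\<Sum>f\<in>faces M. ?h f) \<le> (\<Sum>f\<in>faces M. card f)"
  proof (rule sum_mono)
    fix f assume f: "f \<in> faces M"
    have a: "?g \<le> face_deg f" by (rule face_deg_ge[OF emb sg hc f])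
    have b: "2 * face_deg f \<le> card f" unfolding face_deg_def by simp
    show "?h f \<le> card f" using a b by auto
  qed
  also have "\<dots> \<le> card (flags M)" by (rule sum_faces[OF emb sg hc]) simp
  also have "\<dots> \<le> 4 * card E" by (rule flags_le[OF emb sg hc])
  finally have s: "(\<Sum>f\<in>faces M. ?h f) \<le> 4 * card E" .
  have "(\<Sum>f\<in>faces M. ?h f) = 2 * ?g * card G + 2 * (?g + 1) * card Ot"
    unfolding G_def Ot_def by (simp add: sum.If_cases faces_fin[OF emb sg hc])
  then show ?thesis using s by simp
qed

lemma K2:
  assumes ni: "no_two_intersecting_faces_of_deg M (girth V E)"
  shows "girth V E * card (faces M \<inter> {f. face_deg f = girth V E}) \<le> card V"
proof -
  let ?g = "girth V E"
  let ?G = "faces M \<inter> {f. face_deg f = ?g}"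
  have finG: "finite ?G" using faces_fin[OF emb sg hc] by simp
  have finV: "finite V" using sg unfolding simple_graph_def by blast
  have "?g * card ?G = (\<Sum>f\<in>?G. ?g)" by simp
  also have "\<dots> \<le> (\<Sum>f\<in>?G. card (face_vertices M f))"
    by (rule sum_mono) (rule face_bounds(1)[OF emb sg hc], blast)
  also have "\<dots> = card (\<Union>f\<in>?G. face_vertices M f)"
  proof (rule card_UN_disjoint[symmetric, OF finG])
    show "\<forall>i\<in>?G. finite (face_vertices M i)"
      unfolding face_vertices_def using face_props(4)[OF emb sg hc] by blast
    show "\<forall>i\<in>?G. \<forall>j\<in>?G. i \<noteq> j \<longrightarrow> face_vertices M i \<inter> face_vertices M j = {}"
      using ni unfolding no_two_intersecting_faces_of_deg_def by blast
  qed
  also have "\<dots> \<le> card V"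
  proof (rule card_mono[OF finV])
    have "\<And>f. f \<in> faces M \<Longrightarrow> face_vertices M f \<subseteq> V"
      unfolding face_vertices_def using face_props(1)[OF emb sg hc] e_surjV[OF emb] by blast
    then show "(\<Union>f\<in>?G. face_vertices M f) \<subseteq> V" by blast
  qed
  finally show ?thesis .
qed

lemma K3:
  assumes na: "no_two_adjacent_faces_of_deg M (girth V E)"
  shows "girth V E * card (faces M \<inter> {f. face_deg f = girth V E}) \<le> card E"
proof -
  let ?g = "girth V E"
  let ?G = "faces M \<inter> {f. face_deg f = ?g}"
  define U where "U = (\<Union>f\<in>?G. f)"
  have finG: "finite ?G" using faces_fin[OF emb sg hc] by simp
  have UF: "U \<subseteq> flags M" unfolding U_def using face_props(1)[OF emb sg hc] by blast
  have finU: "finite U" using finite_subset[OF UF e_fin[OF emb]] .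
  have "2 * ?g * card ?G = (\<Sum>f\<in>?G. 2 * ?g)" by simp
  also have "\<dots> \<le> (\<Sum>f\<in>?G. card f)"
  proof (rule sum_mono)
    fix f assume "f \<in> ?G"
    then have "face_deg f = ?g" by simp
    then show "2 * ?g \<le> card f" unfolding face_deg_def by simp
  qed
  also have "\<dots> = card U" unfolding U_def
  proof (rule card_UN_disjoint[symmetric, OF finG])
    show "\<forall>i\<in>?G. finite i" using face_props(4)[OF emb sg hc] by blast
    show "\<forall>i\<in>?G. \<forall>j\<in>?G. i \<noteq> j \<longrightarrow> i \<inter> j = {}" using faces_disj[OF emb sg hc] by blast
  qed
  finally have c1: "2 * ?g * card ?G \<le> card U" .
  have disj: "U \<inter> t2 M ` U = {}"
  proof (rule ccontr)
    assume "U \<inter> t2 M ` U \<noteq> {}"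
    then obtain x where xU: "x \<in> U" and x2U: "t2 M x \<in> U" by blast
    obtain f1 where f1: "f1 \<in> ?G" "x \<in> f1" using xU unfolding U_def by blast
    obtain f2 where f2: "f2 \<in> ?G" "t2 M x \<in> f2" using x2U unfolding U_def by blast
    have xF: "x \<in> flags M" using xU UF by blast
    show False
    proof (cases "f1 = f2")
      case True
      then show False using no_self_gface[of f1 x] f1 f2 by blast
    next
      case False
      have "medge M x \<in> face_edges M f1" unfolding face_edges_def using f1(2) by blast
      moreover have "medge M x \<in> face_edges M f2" unfolding face_edges_def
        using f2(2) medge_t2[OF xF] by (metis image_eqI)
      ultimately show False using na False f1(1) f2(1)
        unfolding no_two_adjacent_faces_of_deg_def by blast
    qed
  qed
  have inj: "inj_on (t2 M) U"
  proof (rule inj_onI)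
    fix a b assume "a \<in> U" "b \<in> U" "t2 M a = t2 M b"
    then show "a = b" using e_2[OF emb] UF by (metis subsetD)
  qed
  have "card (U \<union> t2 M ` U) = card U + card (t2 M ` U)"
    by (rule card_Un_disjoint) (use finU disj in auto)
  also have "\<dots> = 2 * card U" using card_image[OF inj] by simp
  finally have c2: "2 * card U = card (U \<union> t2 M ` U)" by simp
  have "U \<union> t2 M ` U \<subseteq> flags M" using UF e_2[OF emb] by blast
  then have "card (U \<union> t2 M ` U) \<le> card (flags M)" by (rule card_mono[OF e_fin[OF emb]])
  also have "\<dots> \<le> 4 * card E" by (rule flags_le[OF emb sg hc])
  finally show ?thesis using c1 c2 by simp
qed

end



lemma ar_core:
  fixes g Fg Fo E :: real
  assumes "g \<ge> 0" "g * Fg + (g + 1) * Fo \<le> 2 * E"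
  shows "g * (g + 1) * (Fg + Fo) \<le> g * Fg + 2 * g * E"
proof -
  have a: "g * (g * Fg + (g + 1) * Fo) \<le> g * (2 * E)" by (rule mult_left_mono[OF assms(2,1)])
  have b: "g * (g + 1) * (Fg + Fo) = g * Fg + g * (g * Fg + (g + 1) * Fo)"
    by (simp add: algebra_simps)
  show ?thesis using a b by simp
qed

lemma ar1:
  fixes n E F g :: real
  assumes n: "n > 0" and g: "g \<ge> 3" and k: "g * F \<le> 2 * E"
  shows "2 * E / n \<le> 2 * g / (g - 2) * (1 - (n - E + F) / n)"
proof -
  have d: "g - 2 \<noteq> 0" "n \<noteq> 0" using g n by auto
  have eq: "2 * g / (g - 2) * (1 - (n - E + F) / n) - 2 * E / n
      = 2 * (2 * E - g * F) / ((g - 2) * n)"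
    using d by (simp add: field_simps)
  have "0 \<le> 2 * E - g * F" using k by (simp only: diff_ge_0_iff_ge)
  then have "0 \<le> 2 * (2 * E - g * F)" by (metis mult_nonneg_nonneg zero_le_numeral)
  moreover have "0 < (g - 2) * n" using g n by simp
  ultimately have "2 * (2 * E - g * F) / ((g - 2) * n) \<ge> 0" by simp
  then show ?thesis using eq by simp
qed

lemma ar2:
  fixes n E F g :: real
  assumes n: "n > 0" and g: "g \<ge> 3" and k: "g * (g + 1) * F \<le> n + 2 * g * E"
  shows "2 * E / n \<le> 2 + (4 * g + 2) / (g ^ 2 - g) - 2 * (1 + 2 / (g - 1)) * ((n - E + F) / n)"
proof -
  have g3g: "3 * g \<le> g * g" using mult_right_mono[of 3 g g] g by simp
  define D where "D = g * g - g"
  have Dp: "D > 0" unfolding D_def using g3g g by linarith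
  have d: "D \<noteq> 0" "g - 1 \<noteq> 0" "n \<noteq> 0" "g \<noteq> 0" using g n Dp by auto
  have h1: "g ^ 2 - g = D" unfolding D_def by (simp add: power2_eq_square)
  have h2: "2 * (1 + 2 / (g - 1)) = 2 * g * (g + 1) / D"
  proof -
    have "D = g * (g - 1)" unfolding D_def by (simp add: algebra_simps)
    then show ?thesis using d by (simp add: field_simps) (simp add: D_def algebra_simps)
  qed
  have eq: "2 + (4 * g + 2) / D - 2 * g * (g + 1) / D * ((n - E + F) / n) - 2 * E / n
      = (2 * D * n + (4 * g + 2) * n - 2 * g * (g + 1) * (n - E + F) - 2 * E * D) / (D * n)"
    using d by (simp add: field_simps)
  have num: "2 * D * n + (4 * g + 2) * n - 2 * g * (g + 1) * (n - E + F) - 2 * E * D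
      = 2 * (n + 2 * g * E - g * (g + 1) * F)"
    unfolding D_def by (simp add: algebra_simps)
  have "0 \<le> n + 2 * g * E - g * (g + 1) * F" using k by (simp only: diff_ge_0_iff_ge)
  then have "0 \<le> 2 * (n + 2 * g * E - g * (g + 1) * F)" by simp
  moreover have "0 < D * n" using Dp n by simp
  ultimately have "(2 * D * n + (4 * g + 2) * n - 2 * g * (g + 1) * (n - E + F) - 2 * E * D) / (D * n) \<ge> 0"
    using num by simp
  then have "2 * E / n \<le> 2 + (4 * g + 2) / D - 2 * g * (g + 1) / D * ((n - E + F) / n)"
    using eq by simp
  then show ?thesis unfolding h1 h2[symmetric] .
qed

lemma ar3:
  fixes n E F g :: real
  assumes n: "n > 0" and g: "g \<ge> 3" and k: "g * (g + 1) * F \<le> (2 * g + 1) * E"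
  shows "2 * E / n \<le> 2 * g * (g + 1) / (g ^ 2 - g - 1) * (1 - (n - E + F) / n)"
proof -
  have g3g: "3 * g \<le> g * g" using mult_right_mono[of 3 g g] g by simp
  define D where "D = g * g - g - 1"
  have Dp: "D > 0" unfolding D_def using g3g g by linarith
  have d: "D \<noteq> 0" "n \<noteq> 0" using n Dp by auto
  have h1: "g ^ 2 - g - 1 = D" unfolding D_def by (simp add: power2_eq_square)
  have eq: "2 * g * (g + 1) / D * (1 - (n - E + F) / n) - 2 * E / n
      = (2 * g * (g + 1) * (E - F) - 2 * E * D) / (D * n)"
    using d by (simp add: field_simps)
  have num: "2 * g * (g + 1) * (E - F) - 2 * E * D = 2 * ((2 * g + 1) * E - g * (g + 1) * F)"
    unfolding D_def by (simp add: algebra_simps)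
  have "0 \<le> (2 * g + 1) * E - g * (g + 1) * F" using k by (simp only: diff_ge_0_iff_ge)
  then have "0 \<le> 2 * ((2 * g + 1) * E - g * (g + 1) * F)" by (metis mult_nonneg_nonneg zero_le_numeral)
  moreover have "0 < D * n" using Dp n by simp
  ultimately have "(2 * g * (g + 1) * (E - F) - 2 * E * D) / (D * n) \<ge> 0"
    using num by simp
  then have "2 * E / n \<le> 2 * g * (g + 1) / D * (1 - (n - E + F) / n)"
    using eq by simp
  then show ?thesis unfolding h1 .
qed


theorem lemma2p2:
  fixes V :: "'a set" and E :: "'a set set" and M :: "('f, 'a) gmap"
  assumes "simple_graph V E" and "connected_graph V E" and "has_cycle V E"
    and "is_embedding V E M"
    and "\<forall>M' :: ('f, 'a) gmap. is_embedding V E M' \<longrightarrow> euler_char V E M' \<le> euler_char V E M"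
  shows "2 * real (card E) / real (card V)
           \<le> 2 * real (girth V E) / (real (girth V E) - 2)
               * (1 - real_of_int (euler_char V E M) / real (card V))
    \<and> (no_two_intersecting_faces_of_deg M (girth V E) \<longrightarrow>
         2 * real (card E) / real (card V)
           \<le> 2 + (4 * real (girth V E) + 2) / (real (girth V E) ^ 2 - real (girth V E))
               - 2 * (1 + 2 / (real (girth V E) - 1))
                   * (real_of_int (euler_char V E M) / real (card V)))
    \<and> (no_two_adjacent_faces_of_deg M (girth V E) \<longrightarrow>
         2 * real (card E) / real (card V)
           \<le> 2 * real (girth V E) * (real (girth V E) + 1)
                 / (real (girth V E) ^ 2 - real (girth V E) - 1)
               * (1 - real_of_int (euler_char V E M) / real (card V)))"
proof -
  note emb = assms(4) and sg = assms(1) and hc = assms(3)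
  let ?g = "girth V E"
  let ?G = "faces M \<inter> {f. face_deg f = ?g}"
  let ?O = "faces M \<inter> - {f. face_deg f = ?g}"
  have finV: "finite V" using sg unfolding simple_graph_def by blast
  have Vne: "V \<noteq> {}" using assms(2) unfolding connected_graph_def by blast
  have n: "real (card V) > 0" using finV Vne by (simp add: card_gt_0_iff)
  have g3: "?g \<ge> 3" by (rule girth_ge3[OF emb sg hc])
  have g3r: "real ?g \<ge> 3" using g3 by simp
  have finF: "finite (faces M)" by (rule faces_fin[OF emb sg hc])
  have cF: "card (faces M) = card ?G + card ?O"
  proof -
    have "faces M = ?G \<union> ?O" by blast
    moreover have "card (?G \<union> ?O) = card ?G + card ?O"
      by (rule card_Un_disjoint) (use finF in auto)
    ultimately show ?thesis by simp
  qed
  have k1: "?g * card ?G + (?g + 1) * card ?O \<le> 2 * card E" by (rule K1[OF emb sg hc])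
  have k1r: "real ?g * real (card ?G) + (real ?g + 1) * real (card ?O) \<le> 2 * real (card E)"
    using k1 by (metis (mono_tags, lifting) of_nat_add of_nat_le_iff of_nat_mult of_nat_1 of_nat_numeral)
  have core: "real ?g * (real ?g + 1) * (real (card ?G) + real (card ?O))
      \<le> real ?g * real (card ?G) + 2 * real ?g * real (card E)"
    by (rule ar_core) (use k1r in auto)
  have chi: "real_of_int (euler_char V E M) = real (card V) - real (card E) + real (card (faces M))"
    unfolding euler_char_def by simp
  have Fr: "real (card (faces M)) = real (card ?G) + real (card ?O)" using cF by simp
  have p1: "2 * real (card E) / real (card V)
           \<le> 2 * real ?g / (real ?g - 2) * (1 - real_of_int (euler_char V E M) / real (card V))"
    unfolding chi
  proof (rule ar1[OF n g3r])
    show "real ?g * real (card (faces M)) \<le> 2 * real (card E)"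
      using k1r Fr by (simp add: algebra_simps)
  qed
  have p2: "no_two_intersecting_faces_of_deg M ?g \<longrightarrow>
         2 * real (card E) / real (card V)
           \<le> 2 + (4 * real ?g + 2) / (real ?g ^ 2 - real ?g)
               - 2 * (1 + 2 / (real ?g - 1)) * (real_of_int (euler_char V E M) / real (card V))"
  proof
    assume ni: "no_two_intersecting_faces_of_deg M ?g"
    have k2: "?g * card ?G \<le> card V" by (rule K2[OF emb sg hc ni])
    then have k2r: "real ?g * real (card ?G) \<le> real (card V)"
      by (metis of_nat_le_iff of_nat_mult)
    show "2 * real (card E) / real (card V)
           \<le> 2 + (4 * real ?g + 2) / (real ?g ^ 2 - real ?g)
               - 2 * (1 + 2 / (real ?g - 1)) * (real_of_int (euler_char V E M) / real (card V))"
      unfolding chi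
      by (rule ar2[OF n g3r]) (use core k2r Fr in simp)
  qed
  have p3: "no_two_adjacent_faces_of_deg M ?g \<longrightarrow>
         2 * real (card E) / real (card V)
           \<le> 2 * real ?g * (real ?g + 1) / (real ?g ^ 2 - real ?g - 1)
               * (1 - real_of_int (euler_char V E M) / real (card V))"
  proof
    assume na: "no_two_adjacent_faces_of_deg M ?g"
    have k3: "?g * card ?G \<le> card E" by (rule K3[OF emb sg hc na])
    then have k3r: "real ?g * real (card ?G) \<le> real (card E)"
      by (metis of_nat_le_iff of_nat_mult)
    show "2 * real (card E) / real (card V)
           \<le> 2 * real ?g * (real ?g + 1) / (real ?g ^ 2 - real ?g - 1)
               * (1 - real_of_int (euler_char V E M) / real (card V))"
      unfolding chi
    proof (rule ar3[OF n g3r])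
      show "real ?g * (real ?g + 1) * real (card (faces M)) \<le> (2 * real ?g + 1) * real (card E)"
        using core k3r Fr by (simp add: algebra_simps)
    qed
  qed
  show ?thesis using p1 p2 p3 by blast
qed


end
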